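(* Let $\gamma\in(0,1)$, $t\ge1$, $H\ge1$ integers, and for each integer $i$ with $t/2\le i<t$ let $\bm Q_i\in\mathbb R^{|\mathcal S||\mathcal A|}$ satisfy $\bm0\le\bm Q_i\le\frac1{1-\gamma}\bm1$, with $\bm V_i(s)=\max_a\bm Q_i(s,a)$ and greedy policy $\pi_i(s)\in\arg\max_a\bm Q_i(s,a)$. Let $\Pi$ be the set of deterministic policies $\pi$ such that for every $s\in\mathcal S$, $\pi(s)\in\{\pi_i(s):t/2\le i<t\}$ (the index $i$ may depend on $s$). Then for any policies $\widehat\pi_1,\dots,\widehat\pi_{H}\in\Pi$, $$\sum_{h=0}^{H-1}\gamma^h\Big(\prod_{k=1}^h\bm P^{\widehat\pi_k}\Big)\max_{t/2\le i<t}\mathsf{Var}_{\bm P}(\bm V_i)\le\frac{4}{\gamma^2(1-\gamma)^2}\Big(1+2\max_{t/2\le i<t}\|\bm Q_i-\bm Q^\star\|_\infty\Big)\bm1.$$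
   Context: Discounted MDP with finite $\mathcal S,\mathcal A$, rewards in $[0,1]$, discount $\gamma$, optimal Q-function $\bm Q^\star$. Vector inequalities and $\max$ over vectors are entrywise; $\bm1$ is the all-ones vector. $\bm P\in\mathbb R^{|\mathcal S||\mathcal A|\times|\mathcal S|}$ with $\bm P((s,a),s')=P(s'\mid s,a)$. For a deterministic policy $\pi$, $\bm\Pi^\pi(s,(s,a))=1$ iff $a=\pi(s)$ and $0$ otherwise, and $\bm P^\pi=\bm P\bm\Pi^\pi$. For $\bm V\in\mathbb R^{|\mathcal S|}$, $\mathsf{Var}_{\bm P}(\bm V)=\bm P(\bm V\circ\bm V)-(\bm P\bm V)\circ(\bm P\bm V)$, $\circ$ the entrywise product. Empty products are the identity. *)

theory Defs
  imports Complex_Main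
begin

(* Transition kernel  P :: ('s \<times> 'a) \<Rightarrow> 's \<Rightarrow> real,  P (s,a) s' = P(s'|s,a).
   Q-vectors: ('s \<times> 'a) \<Rightarrow> real,  V-vectors: 's \<Rightarrow> real,
   matrices: functions row \<Rightarrow> column \<Rightarrow> real. *)

definition stochastic :: "('s::finite \<times> 'a::finite \<Rightarrow> 's \<Rightarrow> real) \<Rightarrow> bool" where
  "stochastic P \<longleftrightarrow> (\<forall>sa s'. 0 \<le> P sa s') \<and> (\<forall>sa. (\<Sum>s'\<in>UNIV. P sa s') = 1)"

definition vmax :: "('s \<times> 'a::finite \<Rightarrow> real) \<Rightarrow> 's \<Rightarrow> real" where
  "vmax Q s = Max (range (\<lambda>a. Q (s, a)))"

definition Papply :: "('s::finite \<times> 'a \<Rightarrow> 's \<Rightarrow> real) \<Rightarrow> ('s \<Rightarrow> real) \<Rightarrow> ('s \<times> 'a \<Rightarrow> real)" where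
  "Papply P V = (\<lambda>sa. \<Sum>s'\<in>UNIV. P sa s' * V s')"

definition VarP :: "('s::finite \<times> 'a \<Rightarrow> 's \<Rightarrow> real) \<Rightarrow> ('s \<Rightarrow> real) \<Rightarrow> ('s \<times> 'a \<Rightarrow> real)" where
  "VarP P V = (\<lambda>sa. Papply P (\<lambda>s. V s * V s) sa - Papply P V sa * Papply P V sa)"

definition bellman_opt :: "('s::finite \<times> 'a::finite \<Rightarrow> real) \<Rightarrow> ('s \<times> 'a \<Rightarrow> 's \<Rightarrow> real) \<Rightarrow> real
      \<Rightarrow> ('s \<times> 'a \<Rightarrow> real) \<Rightarrow> ('s \<times> 'a \<Rightarrow> real)" where
  "bellman_opt r P \<gamma> Q = (\<lambda>sa. r sa + \<gamma> * Papply P (vmax Q) sa)"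

definition Qstar :: "('s::finite \<times> 'a::finite \<Rightarrow> real) \<Rightarrow> ('s \<times> 'a \<Rightarrow> 's \<Rightarrow> real) \<Rightarrow> real
      \<Rightarrow> ('s \<times> 'a \<Rightarrow> real)" where
  "Qstar r P \<gamma> = (THE Q. bellman_opt r P \<gamma> Q = Q)"

(* P^\<pi> = P \<Pi>^\<pi>, a (|S||A|) x (|S||A|) matrix *)
definition Ppi :: "('s \<times> 'a \<Rightarrow> 's \<Rightarrow> real) \<Rightarrow> ('s \<Rightarrow> 'a) \<Rightarrow> ('s \<times> 'a \<Rightarrow> 's \<times> 'a \<Rightarrow> real)" where
  "Ppi P \<pi> = (\<lambda>sa (s', a'). if a' = \<pi> s' then P sa s' else 0)"

definition mat_mult :: "('x \<Rightarrow> 'x::finite \<Rightarrow> real) \<Rightarrow> ('x \<Rightarrow> 'x \<Rightarrow> real) \<Rightarrow> ('x \<Rightarrow> 'x \<Rightarrow> real)" where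
  "mat_mult A B = (\<lambda>x y. \<Sum>z\<in>UNIV. A x z * B z y)"

definition mat_id :: "'x \<Rightarrow> 'x \<Rightarrow> real" where
  "mat_id = (\<lambda>x y. if x = y then 1 else 0)"

definition mat_vec :: "('x \<Rightarrow> 'x::finite \<Rightarrow> real) \<Rightarrow> ('x \<Rightarrow> real) \<Rightarrow> ('x \<Rightarrow> real)" where
  "mat_vec A v = (\<lambda>x. \<Sum>y\<in>UNIV. A x y * v y)"

fun prod_Ppi :: "('s::finite \<times> 'a::finite \<Rightarrow> 's \<Rightarrow> real) \<Rightarrow> (nat \<Rightarrow> 's \<Rightarrow> 'a) \<Rightarrow> nat
      \<Rightarrow> ('s \<times> 'a \<Rightarrow> 's \<times> 'a \<Rightarrow> real)" where
  "prod_Ppi P pol 0 = mat_id"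
| "prod_Ppi P pol (Suc h) = mat_mult (prod_Ppi P pol h) (Ppi P (pol (Suc h)))"

definition supnorm :: "('x::finite \<Rightarrow> real) \<Rightarrow> real" where
  "supnorm v = Max (range (\<lambda>x. \<bar>v x\<bar>))"

end

theory Submission
  imports Defs
begin


lemma st_nonneg: "stochastic P \<Longrightarrow> 0 \<le> P sa s'" unfolding stochastic_def by blast
lemma st_sum: "stochastic P \<Longrightarrow> (\<Sum>s'\<in>UNIV. P sa s') = 1" unfolding stochastic_def by blast

lemma Papply_le:
  assumes P: "stochastic P" and h: "\<And>s. f s \<le> c1 * g s + c2"
  shows "Papply P f sa \<le> c1 * Papply P g sa + c2"
proof -
  have "Papply P f sa \<le> (\<Sum>s'\<in>UNIV. P sa s' * (c1 * g s' + c2))"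
    unfolding Papply_def by (rule sum_mono) (simp add: mult_left_mono h st_nonneg[OF P])
  also have "\<dots> = c1 * Papply P g sa + c2 * (\<Sum>s'\<in>UNIV. P sa s')"
    unfolding Papply_def by (simp add: algebra_simps sum.distrib sum_distrib_left sum_distrib_right)
  finally show ?thesis using st_sum[OF P] by simp
qed

lemma Papply_ge:
  assumes P: "stochastic P" and h: "\<And>s. c \<le> f s"
  shows "c \<le> Papply P f sa"
proof -
  have "(\<Sum>s'\<in>UNIV. P sa s' * c) \<le> Papply P f sa"
    unfolding Papply_def by (rule sum_mono) (simp add: mult_left_mono h st_nonneg[OF P])
  moreover have "(\<Sum>s'\<in>UNIV. P sa s' * c) = (\<Sum>s'\<in>UNIV. P sa s') * c"
    by (rule sum_distrib_right[symmetric])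
  ultimately show ?thesis using st_sum[OF P, of sa] by simp
qed

lemma Papply_diff: "Papply P f sa - Papply P g sa = Papply P (\<lambda>s. f s - g s) sa"
  unfolding Papply_def by (simp add: sum_subtractf right_diff_distrib)

lemma Papply_absle:
  assumes P: "stochastic P" and h: "\<And>s. \<bar>f s\<bar> \<le> e"
  shows "\<bar>Papply P f sa\<bar> \<le> e"
proof -
  have h1: "f s \<le> 0 * f s + e" for s using h[of s] by arith
  have h2: "-e \<le> f s" for s using h[of s] by arith
  have "Papply P f sa \<le> 0 * Papply P f sa + e" by (rule Papply_le[OF P h1])
  moreover have "-e \<le> Papply P f sa" by (rule Papply_ge[OF P h2])
  ultimately show ?thesis by simp
qed

lemma vmax_ge: "Q (s, a) \<le> vmax Q s"
  unfolding vmax_def by (rule Max_ge) auto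

lemma vmax_ex: "\<exists>a. vmax Q s = Q (s, a)"
proof -
  have "vmax Q s \<in> range (\<lambda>a. Q (s, a))" unfolding vmax_def by (rule Max_in) auto
  then show ?thesis by auto
qed

lemma vmax_greedy: assumes h: "\<And>a. Q (s, a) \<le> Q (s, b)" shows "vmax Q s = Q (s, b)"
proof -
  obtain a where "vmax Q s = Q (s, a)" using vmax_ex[of Q s] by blast
  then show ?thesis using vmax_ge[of Q s b] h[of a] by linarith
qed

lemma vmax_diff:
  assumes h: "\<And>sa. \<bar>A sa - B sa\<bar> \<le> e"
  shows "\<bar>vmax A s - vmax B s\<bar> \<le> e"
proof -
  obtain a where a: "vmax A s = A (s, a)" using vmax_ex[of A s] by blast
  obtain b where b: "vmax B s = B (s, b)" using vmax_ex[of B s] by blast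
  have "A (s,a) \<le> B (s,a) + e" using h[of "(s,a)"] by linarith
  moreover have "B (s,a) \<le> vmax B s" by (rule vmax_ge)
  moreover have "B (s,b) \<le> A (s,b) + e" using h[of "(s,b)"] by linarith
  moreover have "A (s,b) \<le> vmax A s" by (rule vmax_ge)
  ultimately show ?thesis using a b by linarith
qed

lemma vmax_bounds:
  assumes "\<And>sa. c \<le> Q sa \<and> Q sa \<le> d"
  shows "c \<le> vmax Q s \<and> vmax Q s \<le> d"
proof -
  obtain a where "vmax Q s = Q (s, a)" using vmax_ex[of Q s] by blast
  then show ?thesis using assms[of "(s,a)"] by simp
qed

definition rowstoch :: "('x \<Rightarrow> 'x::finite \<Rightarrow> real) \<Rightarrow> bool" where
  "rowstoch M \<longleftrightarrow> (\<forall>x y. 0 \<le> M x y) \<and> (\<forall>x. (\<Sum>y\<in>UNIV. M x y) = 1)"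

lemma mat_vec_le:
  assumes M: "rowstoch M" and h: "\<And>y. u y \<le> c1 * v y + c2 * w y + c3"
  shows "mat_vec M u x \<le> c1 * mat_vec M v x + c2 * mat_vec M w x + c3"
proof -
  have "mat_vec M u x \<le> (\<Sum>y\<in>UNIV. M x y * (c1 * v y + c2 * w y + c3))"
    unfolding mat_vec_def by (rule sum_mono) (use M in \<open>simp add: mult_left_mono h rowstoch_def\<close>)
  also have "\<dots> = c1 * mat_vec M v x + c2 * mat_vec M w x + c3 * (\<Sum>y\<in>UNIV. M x y)"
    unfolding mat_vec_def by (simp add: algebra_simps sum.distrib sum_distrib_left sum_distrib_right)
  finally show ?thesis using M by (simp add: rowstoch_def)
qed

lemma mat_vec_ge:
  assumes M: "rowstoch M" and h: "\<And>y. 0 \<le> u y"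
  shows "0 \<le> mat_vec M u x"
  unfolding mat_vec_def using M h by (auto intro!: sum_nonneg simp: rowstoch_def)

lemma mat_vec_mult: "mat_vec (mat_mult A B) v x = mat_vec A (mat_vec B v) x"
proof -
  have "mat_vec (mat_mult A B) v x = (\<Sum>y\<in>UNIV. \<Sum>z\<in>UNIV. A x z * B z y * v y)"
    unfolding mat_vec_def mat_mult_def by (simp add: sum_distrib_right)
  also have "\<dots> = (\<Sum>z\<in>UNIV. \<Sum>y\<in>UNIV. A x z * B z y * v y)"
    by (rule sum.swap)
  also have "\<dots> = mat_vec A (mat_vec B v) x"
    unfolding mat_vec_def by (simp add: sum_distrib_left mult.assoc)
  finally show ?thesis .
qed

lemma rowstoch_iff: "rowstoch M \<longleftrightarrow> (\<forall>x y. 0 \<le> M x y) \<and> (\<forall>x. mat_vec M (\<lambda>_. 1) x = 1)"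
  unfolding rowstoch_def mat_vec_def by simp

lemma rowstoch_id: "rowstoch (mat_id :: 'x::finite \<Rightarrow> 'x \<Rightarrow> real)"
  unfolding rowstoch_def mat_id_def by (simp add: sum.delta)

lemma rowstoch_mult:
  assumes A: "rowstoch A" and B: "rowstoch B"
  shows "rowstoch (mat_mult A B)"
proof -
  have "\<forall>x y. 0 \<le> mat_mult A B x y"
    using A B unfolding mat_mult_def rowstoch_def by (auto intro!: sum_nonneg)
  moreover have "\<forall>x. mat_vec (mat_mult A B) (\<lambda>_. 1) x = 1"
  proof
    fix x
    have "mat_vec B (\<lambda>_. 1) = (\<lambda>_. 1)" using B by (auto simp: rowstoch_iff)
    then show "mat_vec (mat_mult A B) (\<lambda>_. 1) x = 1" using A by (simp add: mat_vec_mult rowstoch_iff)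
  qed
  ultimately show ?thesis by (simp add: rowstoch_iff)
qed

lemma sum_pair_UNIV:
  "(\<Sum>p\<in>(UNIV::('s::finite \<times> 'a::finite) set). g p) = (\<Sum>s\<in>UNIV. \<Sum>a\<in>UNIV. g (s, a))"
proof -
  have "(\<Sum>s\<in>UNIV. \<Sum>a\<in>UNIV. g (s, a)) = (\<Sum>(s,a)\<in>(UNIV::'s set) \<times> (UNIV::'a set). g (s, a))"
    by (rule sum.cartesian_product)
  then show ?thesis by (simp add: case_prod_eta)
qed

lemma mat_vec_Ppi:
  fixes P :: "'s::finite \<times> 'a::finite \<Rightarrow> 's \<Rightarrow> real"
  shows "mat_vec (Ppi P \<pi>) v sa = (\<Sum>s'\<in>UNIV. P sa s' * v (s', \<pi> s'))"
proof -
  have "mat_vec (Ppi P \<pi>) v sa = (\<Sum>s'\<in>UNIV. \<Sum>a'\<in>UNIV. (if a' = \<pi> s' then P sa s' else 0) * v (s', a'))"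
    unfolding mat_vec_def Ppi_def by (subst sum_pair_UNIV) simp
  also have "\<dots> = (\<Sum>s'\<in>UNIV. P sa s' * v (s', \<pi> s'))"
  proof (rule sum.cong)
    fix s' show "(\<Sum>a'\<in>UNIV. (if a' = \<pi> s' then P sa s' else 0) * v (s', a')) = P sa s' * v (s', \<pi> s')"
    proof -
      have "(\<Sum>a'\<in>UNIV. (if a' = \<pi> s' then P sa s' else 0) * v (s', a'))
          = (\<Sum>a'\<in>UNIV. if a' = \<pi> s' then P sa s' * v (s', \<pi> s') else 0)"
        by (rule sum.cong) auto
      then show ?thesis by simp
    qed
  qed simp
  finally show ?thesis .
qed

lemma rowstoch_Ppi:
  fixes P :: "'s::finite \<times> 'a::finite \<Rightarrow> 's \<Rightarrow> real"
  assumes P: "stochastic P" shows "rowstoch (Ppi P \<pi>)"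
  unfolding rowstoch_iff mat_vec_Ppi using P
  by (auto simp: Ppi_def stochastic_def)

lemma rowstoch_prod:
  fixes P :: "'s::finite \<times> 'a::finite \<Rightarrow> 's \<Rightarrow> real"
  assumes P: "stochastic P" shows "rowstoch (prod_Ppi P pol h)"
  by (induction h) (auto simp: rowstoch_id rowstoch_mult rowstoch_Ppi P)



lemma T_contr:
  assumes P: "stochastic P" and g: "0 \<le> \<gamma>" and h: "\<And>sa. \<bar>A sa - B sa\<bar> \<le> e"
  shows "\<bar>bellman_opt r P \<gamma> A sa - bellman_opt r P \<gamma> B sa\<bar> \<le> \<gamma> * e"
proof -
  have "bellman_opt r P \<gamma> A sa - bellman_opt r P \<gamma> B sa
        = \<gamma> * (Papply P (vmax A) sa - Papply P (vmax B) sa)"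
    unfolding bellman_opt_def by (simp add: algebra_simps)
  also have "\<dots> = \<gamma> * Papply P (\<lambda>s. vmax A s - vmax B s) sa" by (simp add: Papply_diff)
  finally have eq: "bellman_opt r P \<gamma> A sa - bellman_opt r P \<gamma> B sa = \<gamma> * Papply P (\<lambda>s. vmax A s - vmax B s) sa" .
  have "\<bar>Papply P (\<lambda>s. vmax A s - vmax B s) sa\<bar> \<le> e"
    by (rule Papply_absle[OF P]) (rule vmax_diff[OF h])
  then show ?thesis unfolding eq abs_mult using g by (simp add: mult_left_mono)
qed

lemma tail_bound:
  fixes f :: "nat \<Rightarrow> real"
  assumes g: "0 \<le> \<gamma>" "\<gamma> < 1" and h: "\<And>k. \<bar>f k\<bar> \<le> \<gamma> ^ k"
  shows "summable f" "\<bar>suminf f - (\<Sum>k<n. f k)\<bar> \<le> \<gamma> ^ n / (1 - \<gamma>)"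
proof -
  have sg: "summable (\<lambda>k. \<gamma> ^ k)" using g by (intro summable_geometric) simp
  show sf: "summable f" by (rule summable_comparison_test'[OF sg, of 0]) (use h in simp)
  have "suminf f - (\<Sum>k<n. f k) = (\<Sum>k. f (k + n))"
    using suminf_split_initial_segment[OF sf, of n] by simp
  moreover have "norm (\<Sum>k. f (k + n)) \<le> (\<Sum>k. \<gamma> ^ n * \<gamma> ^ k)"
  proof (rule norm_suminf_le)
    fix k show "norm (f (k + n)) \<le> \<gamma> ^ n * \<gamma> ^ k" using h[of "k+n"] by (simp add: power_add mult.commute)
  next
    show "summable (\<lambda>k. \<gamma> ^ n * \<gamma> ^ k)" by (rule summable_mult[OF sg])
  qed
  moreover have "(\<Sum>k. \<gamma> ^ n * \<gamma> ^ k) = \<gamma> ^ n / (1 - \<gamma>)"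
    using suminf_mult[OF sg, of "\<gamma> ^ n"] suminf_geometric[of \<gamma>] g by simp
  ultimately show "\<bar>suminf f - (\<Sum>k<n. f k)\<bar> \<le> \<gamma> ^ n / (1 - \<gamma>)" by (simp only: real_norm_def)
qed

lemma fix_exists:
  fixes P :: "'s::finite \<times> 'a::finite \<Rightarrow> 's \<Rightarrow> real"
  assumes P: "stochastic P" and r: "\<forall>sa. 0 \<le> r sa \<and> r sa \<le> 1" and g: "0 \<le> \<gamma>" "\<gamma> < 1"
  shows "\<exists>Q. bellman_opt r P \<gamma> Q = Q"
proof -
  define T where "T = bellman_opt r P \<gamma>"
  define Qn where "Qn n = (T ^^ n) (\<lambda>_. 0)" for n
  define d where "d n sa = Qn (Suc n) sa - Qn n sa" for n sa
  have QS: "Qn (Suc n) = T (Qn n)" for n unfolding Qn_def by simp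
  have dB: "\<bar>d n sa\<bar> \<le> \<gamma> ^ n" for n sa
  proof (induction n arbitrary: sa)
    case 0
    have v0: "vmax (\<lambda>_. 0) s = 0" for s by (simp add: vmax_def)
    have "T (\<lambda>_. 0) sa = r sa" unfolding T_def bellman_opt_def Papply_def by (simp add: v0)
    moreover have "\<bar>r sa\<bar> \<le> 1" using r by (metis abs_of_nonneg)
    ultimately show ?case unfolding d_def Qn_def by simp
  next
    case (Suc n)
    have "\<bar>T (Qn (Suc n)) sa - T (Qn n) sa\<bar> \<le> \<gamma> * \<gamma> ^ n"
      unfolding T_def by (rule T_contr[OF P g(1)]) (use Suc in \<open>simp add: d_def\<close>)
    then show ?case unfolding d_def QS by simp
  qed
  define L where "L sa = (\<Sum>k. d k sa)" for sa
  have Qn_sum: "Qn n sa = (\<Sum>k<n. d k sa)" for n sa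
    unfolding d_def using sum_lessThan_telescope[of "\<lambda>k. Qn k sa" n] by (simp add: Qn_def)
  have tb: "\<bar>L sa - Qn n sa\<bar> \<le> \<gamma> ^ n / (1 - \<gamma>)" for n sa
    unfolding L_def Qn_sum by (rule tail_bound(2)[OF g]) (rule dB)
  have "T L sa = L sa" for sa
  proof -
    have b: "\<bar>T L sa - L sa\<bar> \<le> 2 / (1 - \<gamma>) * \<gamma> ^ n" for n
    proof -
      have "\<bar>T L sa - T (Qn n) sa\<bar> \<le> \<gamma> * (\<gamma> ^ n / (1 - \<gamma>))"
        unfolding T_def by (rule T_contr[OF P g(1)]) (rule tb)
      moreover have "\<gamma> * (\<gamma> ^ n / (1 - \<gamma>)) \<le> \<gamma> ^ n / (1 - \<gamma>)"
        using g by (intro mult_left_le_one_le) auto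
      moreover have "\<bar>L sa - Qn (Suc n) sa\<bar> \<le> \<gamma> ^ Suc n / (1 - \<gamma>)" by (rule tb)
      moreover have "\<gamma> ^ Suc n / (1 - \<gamma>) \<le> \<gamma> ^ n / (1 - \<gamma>)"
        using g by (intro divide_right_mono) (auto simp: mult_left_le_one_le)
      ultimately show ?thesis unfolding QS by (simp add: field_simps)
    qed
    show ?thesis
    proof (rule ccontr)
      assume ne: "T L sa \<noteq> L sa"
      then have pos: "0 < \<bar>T L sa - L sa\<bar> / (2 / (1 - \<gamma>))" using g by simp
      obtain n where "\<gamma> ^ n < \<bar>T L sa - L sa\<bar> / (2 / (1 - \<gamma>))"
        using real_arch_pow_inv[OF pos g(2)] by blast
      then have "2 / (1 - \<gamma>) * \<gamma> ^ n < \<bar>T L sa - L sa\<bar>"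
        using g by (simp add: field_simps)
      with b[of n] show False by simp
    qed
  qed
  then show ?thesis unfolding T_def by blast
qed

lemma fix_unique:
  fixes P :: "'s::finite \<times> 'a::finite \<Rightarrow> 's \<Rightarrow> real"
  assumes P: "stochastic P" and g: "0 \<le> \<gamma>" "\<gamma> < 1"
    and A: "bellman_opt r P \<gamma> A = A" and B: "bellman_opt r P \<gamma> B = B"
  shows "A = B"
proof -
  define e where "e = Max (range (\<lambda>sa. \<bar>A sa - B sa\<bar>))"
  have eb: "\<bar>A sa - B sa\<bar> \<le> e" for sa unfolding e_def by (rule Max_ge) auto
  obtain sa0 where e0: "e = \<bar>A sa0 - B sa0\<bar>"
  proof -
    have "e \<in> range (\<lambda>sa. \<bar>A sa - B sa\<bar>)" unfolding e_def by (rule Max_in) auto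
    then show ?thesis using that by auto
  qed
  have "\<bar>bellman_opt r P \<gamma> A sa0 - bellman_opt r P \<gamma> B sa0\<bar> \<le> \<gamma> * e"
    by (rule T_contr[OF P g(1) eb])
  then have "e \<le> \<gamma> * e" unfolding A B e0[symmetric] .
  then have "(1 - \<gamma>) * e \<le> 0" by (simp add: algebra_simps)
  moreover have "0 < 1 - \<gamma>" using g by simp
  ultimately have "e \<le> 0" by (simp add: mult_le_0_iff)
  then have "\<bar>A sa - B sa\<bar> \<le> 0" for sa using eb[of sa] by linarith
  then show ?thesis by (intro ext) simp
qed

lemma Qstar_fix:
  fixes P :: "'s::finite \<times> 'a::finite \<Rightarrow> 's \<Rightarrow> real"
  assumes P: "stochastic P" and r: "\<forall>sa. 0 \<le> r sa \<and> r sa \<le> 1" and g: "0 \<le> \<gamma>" "\<gamma> < 1"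
  shows "bellman_opt r P \<gamma> (Qstar r P \<gamma>) = Qstar r P \<gamma>"
proof -
  have "\<exists>!Q. bellman_opt r P \<gamma> Q = Q"
    using fix_exists[OF P r g] fix_unique[OF P g] by blast
  then show ?thesis unfolding Qstar_def by (rule theI')
qed

lemma Qstar_bounds:
  fixes P :: "'s::finite \<times> 'a::finite \<Rightarrow> 's \<Rightarrow> real"
  assumes P: "stochastic P" and r: "\<forall>sa. 0 \<le> r sa \<and> r sa \<le> 1" and g: "0 \<le> \<gamma>" "\<gamma> < 1"
  shows "0 \<le> Qstar r P \<gamma> sa \<and> Qstar r P \<gamma> sa \<le> 1 / (1 - \<gamma>)"
proof -
  define Q where "Q = Qstar r P \<gamma>"
  have fx: "Q sa = r sa + \<gamma> * Papply P (vmax Q) sa" for sa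
    using Qstar_fix[OF P r g] unfolding Q_def bellman_opt_def by metis
  define m where "m = Max (range Q)"
  define n where "n = Min (range Q)"
  have mge: "Q x \<le> m" for x unfolding m_def by (rule Max_ge) auto
  have nle: "n \<le> Q x" for x unfolding n_def by (rule Min_le) auto
  obtain xm where xm: "m = Q xm"
  proof -
    have "m \<in> range Q" unfolding m_def by (rule Max_in) auto
    then show ?thesis using that by auto
  qed
  obtain xn where xn: "n = Q xn"
  proof -
    have "n \<in> range Q" unfolding n_def by (rule Min_in) auto
    then show ?thesis using that by auto
  qed
  have vb: "n \<le> vmax Q s \<and> vmax Q s \<le> m" for s by (rule vmax_bounds) (use mge nle in auto)
  have "Papply P (vmax Q) xm \<le> 0 * Papply P (vmax Q) xm + m" by (rule Papply_le[OF P]) (use vb in simp)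
  then have "\<gamma> * Papply P (vmax Q) xm \<le> \<gamma> * m" using g by (simp add: mult_left_mono)
  then have "m \<le> 1 + \<gamma> * m" using fx[of xm] xm r by (metis add_mono)
  then have mb: "m \<le> 1 / (1 - \<gamma>)" using g by (simp add: field_simps)
  have "n \<le> Papply P (vmax Q) xn" by (rule Papply_ge[OF P]) (use vb in simp)
  then have "\<gamma> * n \<le> \<gamma> * Papply P (vmax Q) xn" using g by (simp add: mult_left_mono)
  then have "\<gamma> * n \<le> n" using fx[of xn] xn r by (metis add_increasing)
  then have "0 \<le> (1 - \<gamma>) * n" by (simp add: algebra_simps)
  moreover have "0 < 1 - \<gamma>" using g by simp
  ultimately have "0 \<le> n" by (simp add: zero_le_mult_iff)
  then show ?thesis using mb mge[of sa] nle[of sa] unfolding Q_def by linarith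
qed



lemma sq_diff:
  fixes a b B e :: real
  assumes "0 \<le> a" "a \<le> B" "0 \<le> b" "b \<le> B" "\<bar>a - b\<bar> \<le> e"
  shows "a * a \<le> 1 * (b * b) + 2 * B * e"
proof -
  have "a * a - b * b = (a - b) * (a + b)" by (simp add: algebra_simps)
  also have "\<dots> \<le> \<bar>a - b\<bar> * (a + b)" by (rule mult_right_mono) (use assms in auto)
  also have "\<dots> \<le> e * (2 * B)" by (rule mult_mono) (use assms in auto)
  finally show ?thesis by (simp add: algebra_simps)
qed

lemma var_cmp:
  fixes P :: "'s::finite \<times> 'a::finite \<Rightarrow> 's \<Rightarrow> real"
  assumes P: "stochastic P" and u: "\<And>s. 0 \<le> u s \<and> u s \<le> B" and w: "\<And>s. 0 \<le> w s \<and> w s \<le> B"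
    and d: "\<And>s. \<bar>u s - w s\<bar> \<le> e"
  shows "VarP P u y \<le> VarP P w y + 4 * B * e"
proof -
  have "Papply P (\<lambda>s. u s * u s) y \<le> 1 * Papply P (\<lambda>s. w s * w s) y + 2 * B * e"
    by (rule Papply_le[OF P]) (rule sq_diff, use u w d in auto)
  moreover have pu: "0 \<le> Papply P u y \<and> Papply P u y \<le> B"
    using Papply_ge[OF P, of 0 u y] Papply_le[OF P, of u 0 u B y] u by auto
  moreover have pw: "0 \<le> Papply P w y \<and> Papply P w y \<le> B"
    using Papply_ge[OF P, of 0 w y] Papply_le[OF P, of w 0 w B y] w by auto
  moreover have "\<bar>Papply P w y - Papply P u y\<bar> \<le> e"
    unfolding Papply_diff by (rule Papply_absle[OF P]) (use d in \<open>simp add: abs_minus_commute\<close>)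
  then have "Papply P w y * Papply P w y \<le> 1 * (Papply P u y * Papply P u y) + 2 * B * e"
    using pu pw by (intro sq_diff) auto
  ultimately show ?thesis unfolding VarP_def by simp
qed

lemma telesc:
  fixes \<gamma> :: real
  assumes g: "0 \<le> \<gamma>" "\<gamma> \<le> 1" and a: "\<And>h. 0 \<le> a h"
  shows "(\<Sum>h<n. \<gamma> ^ h * (\<gamma>\<^sup>2 * a (Suc h) - a h)) \<le> \<gamma> ^ Suc n * a n"
proof (induction n)
  case 0
  then show ?case using g a by simp
next
  case (Suc n)
  have "\<gamma> ^ Suc n * a n \<le> \<gamma> ^ n * a n"
    by (rule mult_right_mono) (use g a in \<open>auto intro: power_decreasing simp: mult_left_le_one_le\<close>)
  then show ?case using Suc by (simp add: algebra_simps power2_eq_square)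
qed

lemma geo_le:
  fixes \<gamma> :: real
  assumes g: "0 \<le> \<gamma>" "\<gamma> < 1"
  shows "(\<Sum>h<n. \<gamma> ^ h) \<le> 1 / (1 - \<gamma>)"
proof -
  have "(\<Sum>h<n. \<gamma> ^ h) = (1 - \<gamma> ^ n) / (1 - \<gamma>)"
  proof -
    have "(\<Sum>h<n. \<gamma> ^ h) * (\<gamma> - 1) = \<gamma> ^ n - 1" using geometric_sum[of \<gamma> n] g by (simp add: divide_simps)
    then have "(\<Sum>h<n. \<gamma> ^ h) * (1 - \<gamma>) = 1 - \<gamma> ^ n" by (simp add: algebra_simps)
    then show ?thesis using g by (simp add: eq_divide_eq)
  qed
  also have "\<dots> \<le> 1 / (1 - \<gamma>)" using g by (intro divide_right_mono) auto
  finally show ?thesis .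
qed

lemma mat_vec_cmult: "mat_vec M (\<lambda>y. c * v y) x = c * mat_vec M v x"
  unfolding mat_vec_def by (simp add: sum_distrib_left mult.left_commute)



theorem mainTheorem10:
  fixes P :: "'s::finite \<times> 'a::finite \<Rightarrow> 's \<Rightarrow> real"
    and r :: "'s \<times> 'a \<Rightarrow> real"
    and \<gamma> :: real and t H :: nat
    and Q :: "nat \<Rightarrow> ('s \<times> 'a \<Rightarrow> real)"
    and \<pi> :: "nat \<Rightarrow> 's \<Rightarrow> 'a"
    and pol :: "nat \<Rightarrow> 's \<Rightarrow> 'a"
  defines "I \<equiv> {i::nat. real t / 2 \<le> real i \<and> i < t}"
  assumes P: "stochastic P"
    and r: "\<forall>sa. 0 \<le> r sa \<and> r sa \<le> 1"
    and \<gamma>: "0 < \<gamma>" "\<gamma> < 1"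
    and t: "1 \<le> t" and H: "1 \<le> H"
    and Qb: "\<forall>i\<in>I. \<forall>sa. 0 \<le> Q i sa \<and> Q i sa \<le> 1 / (1 - \<gamma>)"
    and greedy: "\<forall>i\<in>I. \<forall>s. \<forall>a. Q i (s, a) \<le> Q i (s, \<pi> i s)"
    and pol: "\<forall>k\<in>{1..H}. \<forall>s. pol k s \<in> {\<pi> i s | i. i \<in> I}"
  shows "\<forall>x. (\<Sum>h<H. \<gamma> ^ h *
             mat_vec (prod_Ppi P pol h) (\<lambda>y. Max ((\<lambda>i. VarP P (vmax (Q i)) y) ` I)) x)
         \<le> 4 / (\<gamma>\<^sup>2 * (1 - \<gamma>)\<^sup>2) *
             (1 + 2 * Max ((\<lambda>i. supnorm (\<lambda>sa. Q i sa - Qstar r P \<gamma> sa)) ` I))"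
proof
  fix x
  have g0: "0 \<le> \<gamma>" using \<gamma> by simp
  define B where "B = 1 / (1 - \<gamma>)"
  have B0: "0 < B" using \<gamma> by (simp add: B_def)
  define Qs where "Qs = Qstar r P \<gamma>"
  define Vs where "Vs = vmax Qs"
  define \<epsilon> where "\<epsilon> = Max ((\<lambda>i. supnorm (\<lambda>sa. Q i sa - Qs sa)) ` I)"
  have finI: "finite I" by (rule finite_subset[of _ "{..<t}"]) (auto simp: I_def)
  obtain i0 where i0: "i0 \<in> I"
    using pol H by fastforce
  have Ine: "I \<noteq> {}" using i0 by auto
  have epsi: "\<bar>Q i sa - Qs sa\<bar> \<le> \<epsilon>" if "i \<in> I" for i sa
  proof -
    have "\<bar>Q i sa - Qs sa\<bar> \<le> supnorm (\<lambda>sa. Q i sa - Qs sa)"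
      unfolding supnorm_def by (rule Max_ge) auto
    also have "\<dots> \<le> \<epsilon>" unfolding \<epsilon>_def by (rule Max_ge) (use finI that in auto)
    finally show ?thesis .
  qed
  have e0: "0 \<le> \<epsilon>" using epsi[OF i0, of undefined] by linarith
  have Qsb: "0 \<le> Qs sa \<and> Qs sa \<le> B" for sa
    unfolding Qs_def B_def by (rule Qstar_bounds[OF P r g0 \<gamma>(2)])
  have Vsb: "0 \<le> Vs s \<and> Vs s \<le> B" for s unfolding Vs_def by (rule vmax_bounds) (use Qsb in auto)
  have Vib: "0 \<le> vmax (Q i) s \<and> vmax (Q i) s \<le> B" if "i \<in> I" for i s
    by (rule vmax_bounds) (use Qb that in \<open>auto simp: B_def\<close>)
  have Vid: "\<bar>vmax (Q i) s - Vs s\<bar> \<le> \<epsilon>" if "i \<in> I" for i s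
    unfolding Vs_def by (rule vmax_diff) (rule epsi[OF that])
  have fx: "Qs sa = r sa + \<gamma> * Papply P Vs sa" for sa
    using Qstar_fix[OF P r g0 \<gamma>(2)] unfolding Qs_def Vs_def bellman_opt_def by metis
  define f where "f y = Max ((\<lambda>i. VarP P (vmax (Q i)) y) ` I)" for y
  define Q2 where "Q2 y = Qs y * Qs y" for y
  define M where "M h = prod_Ppi P pol h" for h
  have Mst: "rowstoch (M h)" for h unfolding M_def by (rule rowstoch_prod[OF P])
  have A: "f y \<le> 1 * VarP P Vs y + 0 * VarP P Vs y + 4 * B * \<epsilon>" for y
  proof -
    have "f y \<le> VarP P Vs y + 4 * B * \<epsilon>" unfolding f_def
    proof (subst Max_le_iff)
      show "finite ((\<lambda>i. VarP P (vmax (Q i)) y) ` I)" using finI by simp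
      show "(\<lambda>i. VarP P (vmax (Q i)) y) ` I \<noteq> {}" using Ine by simp
      show "\<forall>a\<in>(\<lambda>i. VarP P (vmax (Q i)) y) ` I. a \<le> VarP P Vs y + 4 * B * \<epsilon>"
      proof
        fix v assume "v \<in> (\<lambda>i. VarP P (vmax (Q i)) y) ` I"
        then obtain i where i: "i \<in> I" "v = VarP P (vmax (Q i)) y" by blast
        show "v \<le> VarP P Vs y + 4 * B * \<epsilon>"
          unfolding i(2) by (rule var_cmp[OF P Vib[OF i(1)] Vsb Vid[OF i(1)]])
      qed
    qed
    then show ?thesis by simp
  qed
  have Fk: "\<gamma>\<^sup>2 * VarP P Vs y \<le> \<gamma>\<^sup>2 * mat_vec (Ppi P (pol k)) Q2 y + (-1) * Q2 y + (2 * B + 4 * \<gamma>\<^sup>2 * B * \<epsilon>)"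
    if k: "k \<in> {1..H}" for k y
  proof -
    have sq: "Vs s * Vs s \<le> 1 * (Qs (s, pol k s) * Qs (s, pol k s)) + 2 * B * (2 * \<epsilon>)" for s
    proof -
      obtain j where j: "j \<in> I" "pol k s = \<pi> j s" using pol k by blast
      have "vmax (Q j) s = Q j (s, \<pi> j s)" by (rule vmax_greedy) (use greedy j in auto)
      moreover have "\<bar>Q j (s, \<pi> j s) - Qs (s, \<pi> j s)\<bar> \<le> \<epsilon>" by (rule epsi[OF j(1)])
      moreover have "\<bar>vmax (Q j) s - Vs s\<bar> \<le> \<epsilon>" by (rule Vid[OF j(1)])
      moreover have "Qs (s, \<pi> j s) \<le> Vs s" unfolding Vs_def by (rule vmax_ge)
      ultimately have "\<bar>Vs s - Qs (s, \<pi> j s)\<bar> \<le> 2 * \<epsilon>" by arith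
      then have "\<bar>Vs s - Qs (s, pol k s)\<bar> \<le> 2 * \<epsilon>" using j(2) by simp
      then show ?thesis using Vsb[of s] Qsb[of "(s, pol k s)"] by (intro sq_diff) auto
    qed
    have "Papply P (\<lambda>s. Vs s * Vs s) y \<le> 1 * Papply P (\<lambda>s. Qs (s, pol k s) * Qs (s, pol k s)) y + 2 * B * (2 * \<epsilon>)"
      by (rule Papply_le[OF P sq])
    moreover have "Papply P (\<lambda>s. Qs (s, pol k s) * Qs (s, pol k s)) y = mat_vec (Ppi P (pol k)) Q2 y"
      unfolding mat_vec_Ppi Papply_def Q2_def by simp
    ultimately have p1: "Papply P (\<lambda>s. Vs s * Vs s) y \<le> mat_vec (Ppi P (pol k)) Q2 y + 4 * B * \<epsilon>" by simp
    have ry: "r y * Qs y \<le> 1 * B" by (rule mult_mono) (use r[rule_format, of y] Qsb[of y] in auto)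
    have "\<gamma>\<^sup>2 * (Papply P Vs y * Papply P Vs y) = (Qs y - r y) * (Qs y - r y)"
      using fx[of y] by (simp add: power2_eq_square algebra_simps)
    also have "\<dots> = Q2 y - 2 * (r y * Qs y) + r y * r y" unfolding Q2_def by (simp add: algebra_simps)
    finally have p2: "Q2 y - 2 * B \<le> \<gamma>\<^sup>2 * (Papply P Vs y * Papply P Vs y)" using ry
      by (smt (verit) zero_le_square)
    have "\<gamma>\<^sup>2 * Papply P (\<lambda>s. Vs s * Vs s) y \<le> \<gamma>\<^sup>2 * (mat_vec (Ppi P (pol k)) Q2 y + 4 * B * \<epsilon>)"
      using p1 by (simp add: mult_left_mono)
    then show ?thesis using p2 unfolding VarP_def by (simp add: algebra_simps)
  qed
  define G where "G h = mat_vec (M h) (VarP P Vs) x" for h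
  define a where "a h = mat_vec (M h) Q2 x" for h
  define c3 where "c3 = 2 * B + 4 * \<gamma>\<^sup>2 * B * \<epsilon>"
  have T1: "\<gamma>\<^sup>2 * G h \<le> \<gamma>\<^sup>2 * a (Suc h) + (-1) * a h + c3" if h: "h < H" for h
  proof -
    have "mat_vec (M h) (\<lambda>y. \<gamma>\<^sup>2 * VarP P Vs y) x
       \<le> \<gamma>\<^sup>2 * mat_vec (M h) (mat_vec (Ppi P (pol (Suc h))) Q2) x + (-1) * mat_vec (M h) Q2 x + c3"
      by (rule mat_vec_le[OF Mst]) (use Fk[of "Suc h"] h in \<open>auto simp: c3_def\<close>)
    then show ?thesis unfolding G_def a_def mat_vec_cmult
      by (simp add: M_def mat_vec_mult)
  qed
  have T2: "mat_vec (M h) f x \<le> 1 * G h + 0 * G h + 4 * B * \<epsilon>" for h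
    unfolding G_def by (rule mat_vec_le[OF Mst A])
  have a0: "0 \<le> a h" for h unfolding a_def Q2_def by (rule mat_vec_ge[OF Mst]) (use Qsb in simp)
  have aB: "a h \<le> B * B" for h
  proof -
    have "a h \<le> 0 * a h + 0 * a h + B * B" unfolding a_def
    proof (rule mat_vec_le[OF Mst])
      fix y show "Q2 y \<le> 0 * Q2 y + 0 * Q2 y + B * B"
        unfolding Q2_def using mult_mono[of "Qs y" B "Qs y" B] Qsb[of y] by auto
    qed
    then show ?thesis by simp
  qed
  define S where "S = (\<Sum>h<H. \<gamma> ^ h)"
  have S0: "0 \<le> S" unfolding S_def by (rule sum_nonneg) (use g0 in simp)
  have SB: "S \<le> B" unfolding S_def B_def by (rule geo_le[OF g0 \<gamma>(2)])
  have fl: "(\<lambda>y. Max ((\<lambda>i. VarP P (vmax (Q i)) y) ` I)) = f" by (rule ext) (simp add: f_def)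
  have L1: "(\<Sum>h<H. \<gamma> ^ h * mat_vec (M h) f x) \<le> (\<Sum>h<H. \<gamma> ^ h * G h) + 4 * B * \<epsilon> * S"
  proof -
    have "(\<Sum>h<H. \<gamma> ^ h * mat_vec (M h) f x) \<le> (\<Sum>h<H. \<gamma> ^ h * G h + \<gamma> ^ h * (4 * B * \<epsilon>))"
      by (rule sum_mono) (use T2 g0 in \<open>simp add: mult_left_mono flip: distrib_left\<close>)
    then show ?thesis by (simp add: sum.distrib S_def sum_distrib_right mult.commute)
  qed
  have L2: "\<gamma>\<^sup>2 * (\<Sum>h<H. \<gamma> ^ h * G h) \<le> B * B + c3 * S"
  proof -
    have "\<gamma>\<^sup>2 * (\<Sum>h<H. \<gamma> ^ h * G h) = (\<Sum>h<H. \<gamma> ^ h * (\<gamma>\<^sup>2 * G h))"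
      by (simp add: sum_distrib_left mult.left_commute)
    also have "\<dots> \<le> (\<Sum>h<H. \<gamma> ^ h * (\<gamma>\<^sup>2 * a (Suc h) - a h) + \<gamma> ^ h * c3)"
      by (rule sum_mono) (use T1 g0 in \<open>simp add: mult_left_mono flip: distrib_left\<close>)
    also have "\<dots> = (\<Sum>h<H. \<gamma> ^ h * (\<gamma>\<^sup>2 * a (Suc h) - a h)) + c3 * S"
      by (simp add: sum.distrib S_def sum_distrib_left mult.commute)
    also have "\<dots> \<le> \<gamma> ^ Suc H * a H + c3 * S"
      using telesc[OF g0 _ a0, where n=H] \<gamma> by simp
    also have "\<gamma> ^ Suc H * a H \<le> 1 * (B * B)"
    proof (rule mult_mono)
      show "\<gamma> ^ Suc H \<le> 1" using g0 \<gamma> by (intro power_le_one) auto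
    qed (use g0 a0 aB in auto)
    finally show ?thesis by simp
  qed
  have c3S: "c3 * S \<le> c3 * B" using SB B0 e0 by (intro mult_left_mono) (auto simp: c3_def)
  have eS: "\<gamma>\<^sup>2 * (4 * B * \<epsilon> * S) \<le> \<gamma>\<^sup>2 * (4 * B * \<epsilon> * B)"
    using SB B0 e0 by (intro mult_left_mono) auto
  have g2: "\<gamma>\<^sup>2 \<le> 1" "0 < \<gamma>\<^sup>2" using \<gamma> by (auto simp: power_le_one)
  have "\<gamma>\<^sup>2 * (\<Sum>h<H. \<gamma> ^ h * mat_vec (M h) f x) \<le> \<gamma>\<^sup>2 * ((\<Sum>h<H. \<gamma> ^ h * G h) + 4 * B * \<epsilon> * S)"
    using L1 g2 by (simp add: mult_left_mono)
  also have "\<dots> \<le> B * B + c3 * B + \<gamma>\<^sup>2 * (4 * B * \<epsilon> * B)"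
    using L2 c3S eS by (simp add: algebra_simps)
  also have "\<dots> = 3 * (B * B) + 8 * \<gamma>\<^sup>2 * (B * B) * \<epsilon>" by (simp add: c3_def algebra_simps)
  also have "\<dots> \<le> 4 * (B * B) * (1 + 2 * \<epsilon>)"
  proof -
    have "\<gamma>\<^sup>2 * (B * B * \<epsilon>) \<le> 1 * (B * B * \<epsilon>)"
      by (rule mult_right_mono) (use g2 e0 in auto)
    moreover have "0 \<le> B * B" by simp
    moreover have "8 * \<gamma>\<^sup>2 * (B * B) * \<epsilon> = 8 * (\<gamma>\<^sup>2 * (B * B * \<epsilon>))" by simp
    moreover have "4 * (B * B) * (1 + 2 * \<epsilon>) = 4 * (B * B) + 8 * (B * B * \<epsilon>)" by (simp add: algebra_simps)
    ultimately show ?thesis by linarith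
  qed
  finally have fin: "\<gamma>\<^sup>2 * (\<Sum>h<H. \<gamma> ^ h * mat_vec (M h) f x) \<le> 4 * (B * B) * (1 + 2 * \<epsilon>)" .
  have rhs: "4 / (\<gamma>\<^sup>2 * (1 - \<gamma>)\<^sup>2) * (1 + 2 * \<epsilon>) = 4 * (B * B) * (1 + 2 * \<epsilon>) / \<gamma>\<^sup>2"
    unfolding B_def by (simp add: power2_eq_square)
  have "(\<Sum>h<H. \<gamma> ^ h * mat_vec (M h) f x) \<le> 4 * (B * B) * (1 + 2 * \<epsilon>) / \<gamma>\<^sup>2"
    using fin g2 by (simp add: pos_le_divide_eq mult.commute)
  then show "(\<Sum>h<H. \<gamma> ^ h *
             mat_vec (prod_Ppi P pol h) (\<lambda>y. Max ((\<lambda>i. VarP P (vmax (Q i)) y) ` I)) x)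
         \<le> 4 / (\<gamma>\<^sup>2 * (1 - \<gamma>)\<^sup>2) *
             (1 + 2 * Max ((\<lambda>i. supnorm (\<lambda>sa. Q i sa - Qstar r P \<gamma> sa)) ` I))"
  proof -
    have em: "Max ((\<lambda>i. supnorm (\<lambda>sa. Q i sa - Qstar r P \<gamma> sa)) ` I) = \<epsilon>"
      by (simp add: \<epsilon>_def Qs_def)
    have pm: "prod_Ppi P pol = M" by (rule ext) (simp add: M_def)
    show ?thesis unfolding fl em rhs pm by fact
  qed
qed

end
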